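(* Let $0<q<1\le p$, $A\in\mathbb{R}^{m\times n}$, $\bar{x}\in\mathbb{R}^n$, $b:=A\bar{x}$, and let $S$ be the number of nonzero groups of $\bar{x}$. Suppose every nonzero group of $\bar{x}$ is active, and the columns of $A$ indexed by the nonzero components of $\bar{x}$ are linearly independent; let $B$ be the submatrix of $A$ formed by these columns. Then there exist $\kappa>0$ and, for each $\lambda\in(0,\kappa)$, a local minimizer $x^*(\lambda)$ of $F_\lambda(x):=\|Ax-b\|_2^2+\lambda\|x\|_{p,q}^q$ such that $$\|x^*(\lambda)-\bar{x}\|_2^2\le\lambda^2q^2S\,\|(B^\top B)^{-1}\|^2\max_{i:\bar{x}_{\mathcal{G}_i}\ne0}\Big(\|\bar{x}_{\mathcal{G}_i}\|_p^{2(q-p)}\sum_{j\in\mathcal{G}_i}|\bar{x}_j|^{2p-2}\Big)\quad\text{for all }\lambda\in(0,\kappa).$$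
   Context: Group structure: $\{1,\dots,n\}$ is partitioned into disjoint nonempty index sets $\mathcal{G}_1,\dots,\mathcal{G}_r$; $x_{\mathcal{G}_i}$ is the subvector indexed by $\mathcal{G}_i$; $\|x\|_{p,q}:=(\sum_{i=1}^r\|x_{\mathcal{G}_i}\|_p^q)^{1/q}$. A group $x_{\mathcal{G}_i}$ is nonzero if some component is nonzero, and active if all its components are nonzero. $\|\cdot\|$ for a matrix is the spectral (operator 2-) norm. *)

theory Defs
  imports "HOL-Analysis.Analysis"
begin

definition group_partition :: "nat \<Rightarrow> (nat \<Rightarrow> 'n::finite set) \<Rightarrow> bool" where
  "group_partition r G \<longleftrightarrow>
     (\<forall>i\<in>{1..r}. G i \<noteq> {}) \<and>
     (\<forall>i\<in>{1..r}. \<forall>k\<in>{1..r}. i \<noteq> k \<longrightarrow> G i \<inter> G k = {}) \<and>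
     (\<Union>i\<in>{1..r}. G i) = UNIV"

definition group_pnorm :: "real \<Rightarrow> 'n::finite set \<Rightarrow> real^'n \<Rightarrow> real" where
  "group_pnorm p Gi x = (\<Sum>j\<in>Gi. \<bar>x $ j\<bar> powr p) powr (1 / p)"

definition pq_norm :: "real \<Rightarrow> real \<Rightarrow> nat \<Rightarrow> (nat \<Rightarrow> 'n::finite set) \<Rightarrow> real^'n \<Rightarrow> real" where
  "pq_norm p q r G x = (\<Sum>i\<in>{1..r}. group_pnorm p (G i) x powr q) powr (1 / q)"

definition group_nonzero :: "'n::finite set \<Rightarrow> real^'n \<Rightarrow> bool" where
  "group_nonzero Gi x \<longleftrightarrow> (\<exists>j\<in>Gi. x $ j \<noteq> 0)"

definition group_active :: "'n::finite set \<Rightarrow> real^'n \<Rightarrow> bool" where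
  "group_active Gi x \<longleftrightarrow> (\<forall>j\<in>Gi. x $ j \<noteq> 0)"

definition local_minimizer :: "(real^'n \<Rightarrow> real) \<Rightarrow> real^'n \<Rightarrow> bool" where
  "local_minimizer f x \<longleftrightarrow> (\<exists>e>0. \<forall>y. dist y x < e \<longrightarrow> f x \<le> f y)"

definition cols_independent :: "real^'n^'m \<Rightarrow> 'n set \<Rightarrow> bool" where
  "cols_independent A T \<longleftrightarrow>
     (\<forall>c. (\<Sum>j\<in>T. c j *\<^sub>R column j A) = 0 \<longrightarrow> (\<forall>j\<in>T. c j = 0))"

text \<open>B^T B where B is the submatrix of A with columns indexed by T
  (a T x T matrix, entries outside T irrelevant).\<close>
definition gram_sub :: "real^'n^'m \<Rightarrow> 'n \<Rightarrow> 'n \<Rightarrow> real" where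
  "gram_sub A j k = column j A \<bullet> column k A"

definition inv_on :: "'n set \<Rightarrow> ('n \<Rightarrow> 'n \<Rightarrow> real) \<Rightarrow> 'n \<Rightarrow> 'n \<Rightarrow> real" where
  "inv_on T M = (SOME N. \<forall>j\<in>T. \<forall>l\<in>T.
      (\<Sum>k\<in>T. M j k * N k l) = (if j = l then 1 else 0))"

definition spec_norm_on :: "'n set \<Rightarrow> ('n \<Rightarrow> 'n \<Rightarrow> real) \<Rightarrow> real" where
  "spec_norm_on T N = Sup ((\<lambda>v. sqrt (\<Sum>j\<in>T. (\<Sum>k\<in>T. N j k * v k)\<^sup>2))
                             ` {v. (\<Sum>k\<in>T. (v k)\<^sup>2) \<le> 1})"

end

theory Submission
  imports Defs
begin



lemma gram_sym: "gram_sub A j k = gram_sub A k j"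
  by (simp add: gram_sub_def inner_commute)

lemma gram_inverse_exists:
  fixes A :: "real^'n^'m" and T :: "'n set"
  assumes ci: "cols_independent A T"
  shows "\<exists>N. \<forall>j\<in>T. \<forall>l\<in>T. (\<Sum>k\<in>T. gram_sub A j k * N k l) = (if j = l then 1 else 0)"
proof -
  define M' :: "real^'n^'n" where
    "M' = (\<chi> j k. if j \<in> T \<and> k \<in> T then gram_sub A j k else if j = k then 1 else 0)"
  have inj: "x = 0" if hx: "M' *v x = 0" for x
  proof -
    have comp: "(M' *v x) $ j = (if j \<in> T then (\<Sum>k\<in>T. gram_sub A j k * x$k) else x $ j)" for j
    proof (cases "j \<in> T")
      case True
      have "(M' *v x) $ j = (\<Sum>k\<in>UNIV. if k \<in> T then gram_sub A j k * x$k else 0)"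
        using True by (auto simp: matrix_vector_mult_def M'_def intro!: sum.cong)
      also have "\<dots> = (\<Sum>k\<in>T. gram_sub A j k * x$k)"
        by (simp add: sum.If_cases)
      finally show ?thesis using True by simp
    next
      case False
      have "(M' *v x) $ j = (\<Sum>k\<in>UNIV. if j = k then x$k else 0)"
        unfolding matrix_vector_mult_def M'_def vec_lambda_beta using False by (intro sum.cong) auto
      also have "\<dots> = x $ j" by simp
      finally show ?thesis using False by simp
    qed
    have off: "x $ j = 0" if "j \<notin> T" for j using hx comp[of j] that by simp
    have on: "(\<Sum>k\<in>T. gram_sub A j k * x$k) = 0" if "j \<in> T" for j
      using hx comp[of j] that by simp
    define v where "v = (\<Sum>k\<in>T. x$k *\<^sub>R column k A)"
    have "v \<bullet> v = (\<Sum>j\<in>T. x$j * (\<Sum>k\<in>T. gram_sub A j k * x$k))"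
      unfolding v_def gram_sub_def
      by (simp add: inner_sum_left inner_sum_right sum_distrib_left algebra_simps inner_commute)
    also have "\<dots> = 0" using on by simp
    finally have "v = 0" by simp
    hence "\<forall>j\<in>T. x$j = 0" using ci unfolding cols_independent_def v_def by blast
    with off show "x = 0" by (metis vec_eq_iff zero_index)
  qed
  have "\<exists>B. B ** M' = mat 1"
    using inj by (simp add: matrix_left_invertible_injective inj_on_def)
       (metis (no_types) matrix_vector_mult_diff_distrib right_minus_eq)
  then obtain B where "B ** M' = mat 1" by blast
  hence MB: "M' ** B = mat 1" using matrix_left_right_inverse by blast
  show ?thesis
  proof (intro exI ballI)
    fix j l assume j: "j \<in> T" and l: "l \<in> T"
    have "(M' ** B) $ j $ l = (\<Sum>k\<in>UNIV. if k \<in> T then gram_sub A j k * B$k$l else 0)"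
      using j by (auto simp: matrix_matrix_mult_def M'_def intro!: sum.cong)
    also have "\<dots> = (\<Sum>k\<in>T. gram_sub A j k * B$k$l)"
      by (simp add: sum.If_cases)
    finally show "(\<Sum>k\<in>T. gram_sub A j k * (\<lambda>k l. B$k$l) k l) = (if j = l then 1 else 0)"
      using MB by (simp add: mat_def)
  qed
qed





lemma gram_left_inverse:
  fixes T :: "'n::finite set"
  assumes R: "\<forall>j\<in>T. \<forall>l\<in>T. (\<Sum>k\<in>T. gram_sub A j k * N k l) = (if j = l then 1 else 0)"
  shows "\<forall>j\<in>T. \<forall>l\<in>T. (\<Sum>k\<in>T. N j k * gram_sub A k l) = (if j = l then 1 else 0)"
proof -
  let ?M = "gram_sub A"
  have h1: "(\<Sum>k\<in>T. N k j * ?M k l) = (if j = l then 1 else 0)" if "j \<in> T" "l \<in> T" for j l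
  proof -
    have "(\<Sum>k\<in>T. N k j * ?M k l) = (\<Sum>k\<in>T. ?M l k * N k j)"
      by (simp add: gram_sym mult.commute)
    also have "\<dots> = (if l = j then 1 else 0)" using R that by blast
    finally show ?thesis by auto
  qed
  have sym: "N j l = N l j" if "j \<in> T" "l \<in> T" for j l
  proof -
    have "N j l = (\<Sum>k\<in>T. (if j = k then 1 else 0) * N k l)"
      using that by (simp add: if_distrib[of "\<lambda>t. t * N _ l"] cong: if_cong)
    also have "\<dots> = (\<Sum>k\<in>T. (\<Sum>m\<in>T. N m j * ?M m k) * N k l)"
      using h1 that by (intro sum.cong) auto
    also have "\<dots> = (\<Sum>m\<in>T. N m j * (\<Sum>k\<in>T. ?M m k * N k l))"
    proof -
      have "(\<Sum>k\<in>T. (\<Sum>m\<in>T. N m j * ?M m k) * N k l) = (\<Sum>k\<in>T. \<Sum>m\<in>T. N m j * (?M m k * N k l))"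
        by (simp add: sum_distrib_right mult.assoc)
      also have "\<dots> = (\<Sum>m\<in>T. \<Sum>k\<in>T. N m j * (?M m k * N k l))" by (rule sum.swap)
      also have "\<dots> = (\<Sum>m\<in>T. N m j * (\<Sum>k\<in>T. ?M m k * N k l))" by (simp add: sum_distrib_left)
      finally show ?thesis .
    qed
    also have "\<dots> = (\<Sum>m\<in>T. N m j * (if m = l then 1 else 0))"
      using R that by (intro sum.cong) auto
    also have "\<dots> = N l j" using that by (simp add: if_distrib[of "\<lambda>t. N _ j * t"] cong: if_cong)
    finally show ?thesis .
  qed
  show ?thesis
  proof (intro ballI)
    fix j l assume "j \<in> T" "l \<in> T"
    have "(\<Sum>k\<in>T. N j k * ?M k l) = (\<Sum>k\<in>T. N k j * ?M k l)"
      using sym \<open>j \<in> T\<close> by (intro sum.cong) auto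
    then show "(\<Sum>k\<in>T. N j k * ?M k l) = (if j = l then 1 else 0)"
      using h1 \<open>j \<in> T\<close> \<open>l \<in> T\<close> by simp
  qed
qed



lemma spec_norm_bound:
  fixes T :: "'n::finite set"
  shows "sqrt (\<Sum>j\<in>T. (\<Sum>k\<in>T. N j k * v k)\<^sup>2) \<le> spec_norm_on T N * sqrt (\<Sum>k\<in>T. (v k)\<^sup>2)"
    and "0 \<le> spec_norm_on T N"
proof -
  define f where "f = (\<lambda>v. sqrt (\<Sum>j\<in>T. (\<Sum>k\<in>T. N j k * v k)\<^sup>2))"
  define U where "U = {v::'n\<Rightarrow>real. (\<Sum>k\<in>T. (v k)\<^sup>2) \<le> 1}"
  have sn: "spec_norm_on T N = Sup (f ` U)" unfolding spec_norm_on_def f_def U_def by simp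
  have bdd: "bdd_above (f ` U)"
  proof
    fix y assume "y \<in> f ` U"
    then obtain w where w: "w \<in> U" "y = f w" by auto
    have wk: "\<bar>w k\<bar> \<le> 1" if "k \<in> T" for k
    proof -
      have "(w k)\<^sup>2 \<le> (\<Sum>k\<in>T. (w k)\<^sup>2)"
        using that by (intro member_le_sum) auto
      also have "\<dots> \<le> 1" using w U_def by auto
      finally show ?thesis by (simp add: abs_square_le_1)  
    qed
    have "\<bar>\<Sum>k\<in>T. N j k * w k\<bar> \<le> (\<Sum>k\<in>T. \<bar>N j k\<bar>)" for j
    proof -
      have "\<bar>\<Sum>k\<in>T. N j k * w k\<bar> \<le> (\<Sum>k\<in>T. \<bar>N j k * w k\<bar>)" by (rule sum_abs)
      also have "\<dots> \<le> (\<Sum>k\<in>T. \<bar>N j k\<bar>)"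
        using wk by (intro sum_mono) (auto simp: abs_mult intro: mult_left_le)
      finally show ?thesis .
    qed
    hence "(\<Sum>k\<in>T. N j k * w k)\<^sup>2 \<le> (\<Sum>k\<in>T. \<bar>N j k\<bar>)\<^sup>2" for j
    proof -
      have "(\<Sum>k\<in>T. N j k * w k)\<^sup>2 = \<bar>\<Sum>k\<in>T. N j k * w k\<bar>\<^sup>2" by simp
      also have "\<dots> \<le> (\<Sum>k\<in>T. \<bar>N j k\<bar>)\<^sup>2"
        by (rule power_mono[OF \<open>\<And>j. \<bar>\<Sum>k\<in>T. N j k * w k\<bar> \<le> (\<Sum>k\<in>T. \<bar>N j k\<bar>)\<close> abs_ge_zero])
      finally show ?thesis .
    qed
    hence "(\<Sum>j\<in>T. (\<Sum>k\<in>T. N j k * w k)\<^sup>2) \<le> (\<Sum>j\<in>T. (\<Sum>k\<in>T. \<bar>N j k\<bar>)\<^sup>2)"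
      by (intro sum_mono) auto
    thus "y \<le> sqrt (\<Sum>j\<in>T. (\<Sum>k\<in>T. \<bar>N j k\<bar>)\<^sup>2)" using w f_def by simp
  qed
  have z: "(\<lambda>_. 0) \<in> U" unfolding U_def by simp
  have f0: "f (\<lambda>_. 0) = 0" unfolding f_def by simp
  show nn: "0 \<le> spec_norm_on T N"
    unfolding sn using cSup_upper[OF imageI[OF z] bdd] f0 by simp
  show "sqrt (\<Sum>j\<in>T. (\<Sum>k\<in>T. N j k * v k)\<^sup>2) \<le> spec_norm_on T N * sqrt (\<Sum>k\<in>T. (v k)\<^sup>2)"
  proof (cases "(\<Sum>k\<in>T. (v k)\<^sup>2) = 0")
    case True
    hence "\<forall>k\<in>T. v k = 0" by (simp add: sum_nonneg_eq_0_iff)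
    thus ?thesis using nn by simp
  next
    case False
    define s where "s = sqrt (\<Sum>k\<in>T. (v k)\<^sup>2)"
    have "(\<Sum>k\<in>T. (v k)\<^sup>2) \<ge> 0" by (simp add: sum_nonneg)
    hence sp: "s > 0" using False s_def by simp
    define w where "w = (\<lambda>k. v k / s)"
    have "(\<Sum>k\<in>T. (w k)\<^sup>2) = (\<Sum>k\<in>T. (v k)\<^sup>2) / s\<^sup>2"
      unfolding w_def power_divide by (rule sum_divide_distrib[symmetric])
    also have "\<dots> = 1" using sp s_def False by (simp add: sum_nonneg)
    finally have "w \<in> U" unfolding U_def by simp
    hence le: "f w \<le> spec_norm_on T N" unfolding sn by (intro cSup_upper bdd) auto
    have "f w = f v / s"
    proof -
      have e1: "(\<Sum>k\<in>T. N j k * w k) = (\<Sum>k\<in>T. N j k * v k) / s" for j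
        unfolding w_def sum_divide_distrib by (intro sum.cong) auto
      have "(\<Sum>j\<in>T. (\<Sum>k\<in>T. N j k * w k)\<^sup>2) = (\<Sum>j\<in>T. (\<Sum>k\<in>T. N j k * v k)\<^sup>2 / s\<^sup>2)"
        unfolding e1 power_divide by simp
      also have "\<dots> = (\<Sum>j\<in>T. (\<Sum>k\<in>T. N j k * v k)\<^sup>2) / s\<^sup>2"
        by (rule sum_divide_distrib[symmetric])
      finally have "(\<Sum>j\<in>T. (\<Sum>k\<in>T. N j k * w k)\<^sup>2) = (\<Sum>j\<in>T. (\<Sum>k\<in>T. N j k * v k)\<^sup>2) / s\<^sup>2" .
      thus ?thesis unfolding f_def using sp by (simp add: real_sqrt_divide)
    qed
    with le sp have "f v \<le> spec_norm_on T N * s" by (simp add: divide_le_eq mult.commute)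
    thus ?thesis unfolding f_def s_def .
  qed
qed




lemma abs_powr_sq: "\<bar>x::real\<bar> powr e = (x\<^sup>2) powr (e/2)"
proof (cases "x = 0")
  case True then show ?thesis by simp
next
  case False
  have e: "x\<^sup>2 = \<bar>x\<bar> powr 2" using False by (simp add: powr_realpow[symmetric])
  show ?thesis unfolding e powr_powr by simp
qed

locale gsetup =
  fixes p q :: real and A :: "real^'n^'m" and xbar :: "real^'n"
    and r :: nat and G :: "nat \<Rightarrow> 'n set"
  assumes part: "group_partition r G"
    and q0: "0 < q" and q1: "q < 1" and p1: "1 \<le> p"
    and act: "\<forall>i\<in>{1..r}. group_nonzero (G i) xbar \<longrightarrow> group_active (G i) xbar"
    and ci: "cols_independent A {j. xbar $ j \<noteq> 0}"
begin

definition "T = {j. xbar $ j \<noteq> 0}"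
definition "NZ = {i\<in>{1..r}. group_nonzero (G i) xbar}"
definition "ZG = {i\<in>{1..r}. \<not> group_nonzero (G i) xbar}"
definition Sg :: "nat \<Rightarrow> real^'n \<Rightarrow> real" where "Sg i x = (\<Sum>j\<in>G i. \<bar>x$j\<bar> powr p)"
definition Pt :: "real^'n \<Rightarrow> real" where "Pt x = (\<Sum>i\<in>NZ. Sg i x powr (q/p))"
definition onT :: "real^'n \<Rightarrow> bool" where "onT x \<longleftrightarrow> (\<forall>j. j \<notin> T \<longrightarrow> x$j = 0)"
definition proj :: "real^'n \<Rightarrow> real^'n" where "proj x = (\<chi> j. if j \<in> T then x$j else 0)"

lemma p0: "0 < p" using p1 by simp

lemma finNZ: "finite NZ" and finZG: "finite ZG"
  unfolding NZ_def ZG_def by auto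

lemma NZ_sub: "i \<in> NZ \<Longrightarrow> j \<in> G i \<Longrightarrow> j \<in> T"
  using act unfolding NZ_def T_def group_active_def by auto

lemma ZG_disj: "i \<in> ZG \<Longrightarrow> j \<in> G i \<Longrightarrow> j \<notin> T"
  unfolding ZG_def T_def group_nonzero_def by auto

lemma covers: "\<exists>i\<in>{1..r}. j \<in> G i"
  using part unfolding group_partition_def by blast

lemma disj: "i \<in> {1..r} \<Longrightarrow> k \<in> {1..r} \<Longrightarrow> j \<in> G i \<Longrightarrow> j \<in> G k \<Longrightarrow> i = k"
  using part unfolding group_partition_def by blast

lemma nonempty: "i \<in> {1..r} \<Longrightarrow> G i \<noteq> {}"
  using part unfolding group_partition_def by blast

lemma T_group: "k \<in> T \<Longrightarrow> \<exists>i\<in>NZ. k \<in> G i"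
  using covers[of k] unfolding NZ_def T_def group_nonzero_def by auto

lemma notT_group: "k \<notin> T \<Longrightarrow> \<exists>i\<in>ZG. k \<in> G i"
  using covers[of k] NZ_sub unfolding NZ_def ZG_def by blast

lemma NZ_uniq: "i \<in> NZ \<Longrightarrow> i' \<in> NZ \<Longrightarrow> k \<in> G i \<Longrightarrow> k \<in> G i' \<Longrightarrow> i = i'"
  using disj unfolding NZ_def by blast

lemma T_Union: "T = (\<Union>i\<in>NZ. G i)"
  using T_group NZ_sub by blast

lemma NZ_ZG: "{1..r} = NZ \<union> ZG" "NZ \<inter> ZG = {}"
  unfolding NZ_def ZG_def by auto

lemma NZ_empty_iff: "NZ = {} \<longleftrightarrow> T = {}"
proof
  assume "NZ = {}" then show "T = {}" using T_Union by simp
next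
  assume T0: "T = {}"
  show "NZ = {}"
  proof (rule ccontr)
    assume "NZ \<noteq> {}"
    then obtain i where i: "i \<in> NZ" by blast
    then have "G i \<noteq> {}" using nonempty NZ_def by auto
    then obtain j where "j \<in> G i" by blast
    then show False using NZ_sub[OF i] T0 by blast
  qed
qed

lemma Sg_nonneg: "0 \<le> Sg i x" unfolding Sg_def by (simp add: sum_nonneg)

lemma Sg_pos: "i \<in> NZ \<Longrightarrow> \<forall>j\<in>G i. x$j \<noteq> 0 \<Longrightarrow> 0 < Sg i x"
  unfolding Sg_def using nonempty[of i] NZ_def
  by (intro sum_pos) auto

lemma group_pnorm_q: "group_pnorm p (G i) x powr q = Sg i x powr (q/p)"
  unfolding group_pnorm_def Sg_def by (simp add: powr_powr)

lemma P_eq: "pq_norm p q r G x powr q = Pt x + (\<Sum>i\<in>ZG. Sg i x powr (q/p))"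
proof -
  have s0: "0 \<le> (\<Sum>i\<in>{1..r}. group_pnorm p (G i) x powr q)" by (simp add: sum_nonneg)
  have "pq_norm p q r G x powr q = (\<Sum>i\<in>{1..r}. group_pnorm p (G i) x powr q)"
    unfolding pq_norm_def using s0 q0 by (simp add: powr_powr)
  also have "\<dots> = (\<Sum>i\<in>{1..r}. Sg i x powr (q/p))" by (simp add: group_pnorm_q)
  also have "\<dots> = Pt x + (\<Sum>i\<in>ZG. Sg i x powr (q/p))"
    unfolding Pt_def NZ_ZG(1) using NZ_ZG(2) finNZ finZG by (simp add: sum.union_disjoint)
  finally show ?thesis .
qed

lemma Sg_ZG_onT: "onT x \<Longrightarrow> i \<in> ZG \<Longrightarrow> Sg i x = 0"
  unfolding Sg_def onT_def using ZG_disj by simp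

lemma P_onT: "onT x \<Longrightarrow> pq_norm p q r G x powr q = Pt x"
  using P_eq Sg_ZG_onT by simp

lemma Sg_proj: "i \<in> NZ \<Longrightarrow> Sg i (proj x) = Sg i x"
  unfolding Sg_def proj_def using NZ_sub by (intro sum.cong) auto

lemma Pt_proj: "Pt (proj x) = Pt x"
  unfolding Pt_def using Sg_proj by simp

lemma onT_proj: "onT (proj x)" unfolding onT_def proj_def by simp

lemma onT_xbar: "onT xbar" unfolding onT_def T_def by simp

lemma Pt_nonneg: "0 \<le> Pt x" unfolding Pt_def by (simp add: sum_nonneg)

end


context gsetup begin

definition "M = gram_sub A"
definition "N = inv_on T M"
definition "nN = spec_norm_on T N"
definition "CM2 = (\<Sum>k\<in>T. (norm (column k A))\<^sup>2)"
definition "CA = (\<Sum>j\<in>UNIV. norm (column j A))"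

lemma MN: "\<forall>j\<in>T. \<forall>l\<in>T. (\<Sum>k\<in>T. M j k * N k l) = (if j = l then 1 else 0)"
proof -
  have ex: "\<exists>N. \<forall>j\<in>T. \<forall>l\<in>T. (\<Sum>k\<in>T. M j k * N k l) = (if j = l then 1 else 0)"
    using gram_inverse_exists[OF ci] unfolding T_def M_def by simp
  show ?thesis unfolding N_def inv_on_def by (rule someI_ex[OF ex])
qed

lemma NM: "\<forall>j\<in>T. \<forall>l\<in>T. (\<Sum>k\<in>T. N j k * M k l) = (if j = l then 1 else 0)"
  using gram_left_inverse[OF MN[unfolded M_def]] unfolding M_def .

lemma Av_onT: "onT d \<Longrightarrow> A *v d = (\<Sum>l\<in>T. d$l *\<^sub>R column l A)"
proof -
  assume d: "onT d"
  have "A *v d = (\<Sum>l\<in>UNIV. d$l *\<^sub>R column l A)"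
    by (simp add: matrix_mult_sum scalar_mult_eq_scaleR)
  also have "\<dots> = (\<Sum>l\<in>T. d$l *\<^sub>R column l A)"
    using d unfolding onT_def by (intro sum.mono_neutral_right) auto
  finally show ?thesis .
qed

lemma u_eq: "onT d \<Longrightarrow> column k A \<bullet> (A *v d) = (\<Sum>l\<in>T. M k l * d$l)"
  by (simp add: Av_onT inner_sum_right M_def gram_sub_def mult.commute)

lemma norm_onT: "onT d \<Longrightarrow> norm d = sqrt (\<Sum>j\<in>T. (d$j)\<^sup>2)"
proof -
  assume d: "onT d"
  have "norm d = sqrt (\<Sum>j\<in>UNIV. (d$j)\<^sup>2)"
    by (simp add: norm_eq_sqrt_inner inner_vec_def power2_eq_square)
  also have "(\<Sum>j\<in>UNIV. (d$j)\<^sup>2) = (\<Sum>j\<in>T. (d$j)\<^sup>2)"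
    using d unfolding onT_def by (intro sum.mono_neutral_right) auto
  finally show ?thesis .
qed

lemma d_recon: "onT d \<Longrightarrow> j \<in> T \<Longrightarrow> d$j = (\<Sum>k\<in>T. N j k * (column k A \<bullet> (A *v d)))"
proof -
  assume d: "onT d" and j: "j \<in> T"
  have "(\<Sum>k\<in>T. N j k * (column k A \<bullet> (A *v d))) = (\<Sum>k\<in>T. \<Sum>l\<in>T. N j k * M k l * d$l)"
    using d by (simp add: u_eq sum_distrib_left mult.assoc)
  also have "\<dots> = (\<Sum>l\<in>T. \<Sum>k\<in>T. N j k * M k l * d$l)" by (rule sum.swap)
  also have "\<dots> = (\<Sum>l\<in>T. (\<Sum>k\<in>T. N j k * M k l) * d$l)" by (simp add: sum_distrib_right)
  also have "\<dots> = (\<Sum>l\<in>T. (if j = l then 1 else 0) * d$l)"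
    using NM j by (intro sum.cong) auto
  also have "\<dots> = d$j" using j by (simp add: if_distrib[of "\<lambda>t. t * d$_"] cong: if_cong)
  finally show ?thesis by simp
qed

lemma norm_d_bound: "onT d \<Longrightarrow> norm d \<le> nN * sqrt (\<Sum>k\<in>T. (column k A \<bullet> (A *v d))\<^sup>2)"
proof -
  assume d: "onT d"
  have "norm d = sqrt (\<Sum>j\<in>T. (\<Sum>k\<in>T. N j k * (column k A \<bullet> (A *v d)))\<^sup>2)"
    using d norm_onT d_recon by (simp cong: sum.cong)
  also have "\<dots> \<le> nN * sqrt (\<Sum>k\<in>T. (column k A \<bullet> (A *v d))\<^sup>2)"
    unfolding nN_def by (rule spec_norm_bound(1))
  finally show ?thesis .
qed

lemma nN_nonneg: "0 \<le> nN" unfolding nN_def by (rule spec_norm_bound(2))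

lemma CM_bound: "(\<Sum>k\<in>T. (column k A \<bullet> v)\<^sup>2) \<le> CM2 * (norm v)\<^sup>2"
proof -
  have "(\<Sum>k\<in>T. (column k A \<bullet> v)\<^sup>2) \<le> (\<Sum>k\<in>T. (norm (column k A))\<^sup>2 * (norm v)\<^sup>2)"
  proof (intro sum_mono)
    fix k
    have "\<bar>column k A \<bullet> v\<bar> \<le> norm (column k A) * norm v" by (rule Cauchy_Schwarz_ineq2)
    hence "\<bar>column k A \<bullet> v\<bar>\<^sup>2 \<le> (norm (column k A) * norm v)\<^sup>2"
      by (rule power_mono) simp
    thus "(column k A \<bullet> v)\<^sup>2 \<le> (norm (column k A))\<^sup>2 * (norm v)\<^sup>2"
      by (simp add: power_mult_distrib)
  qed
  also have "\<dots> = CM2 * (norm v)\<^sup>2" unfolding CM2_def by (simp add: sum_distrib_right)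
  finally show ?thesis .
qed

lemma CM2_nonneg: "0 \<le> CM2" unfolding CM2_def by (simp add: sum_nonneg)

lemma apriori: "onT d \<Longrightarrow> (norm d)\<^sup>2 \<le> nN\<^sup>2 * CM2 * (norm (A *v d))\<^sup>2"
proof -
  assume d: "onT d"
  have "norm d \<le> nN * sqrt (\<Sum>k\<in>T. (column k A \<bullet> (A *v d))\<^sup>2)" by (rule norm_d_bound[OF d])
  hence "(norm d)\<^sup>2 \<le> (nN * sqrt (\<Sum>k\<in>T. (column k A \<bullet> (A *v d))\<^sup>2))\<^sup>2"
    by (rule power_mono) simp
  also have "\<dots> = nN\<^sup>2 * (\<Sum>k\<in>T. (column k A \<bullet> (A *v d))\<^sup>2)"
    by (simp add: power_mult_distrib sum_nonneg)
  also have "\<dots> \<le> nN\<^sup>2 * (CM2 * (norm (A *v d))\<^sup>2)"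
    by (rule mult_left_mono[OF CM_bound]) simp
  finally show ?thesis by (simp add: mult.assoc)
qed

lemma CA_bound: "norm (A *v v) \<le> CA * norm v"
proof -
  have "norm (A *v v) = norm (\<Sum>j\<in>UNIV. v$j *\<^sub>R column j A)"
    by (simp add: matrix_mult_sum scalar_mult_eq_scaleR)
  also have "\<dots> \<le> (\<Sum>j\<in>UNIV. norm (v$j *\<^sub>R column j A))" by (rule norm_sum)
  also have "\<dots> \<le> (\<Sum>j\<in>UNIV. norm v * norm (column j A))"
    by (intro sum_mono) (simp add: mult_right_mono component_le_norm_cart)
  also have "\<dots> = CA * norm v" unfolding CA_def by (simp add: sum_distrib_left mult.commute)
  finally show ?thesis .
qed

lemma CA_nonneg: "0 \<le> CA" unfolding CA_def by (simp add: sum_nonneg)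

end


context gsetup begin

definition grad :: "'n \<Rightarrow> real^'n \<Rightarrow> real" where
  "grad k x = (\<Sum>i\<in>NZ. (q/p) * Sg i x powr (q/p - 1) * (of_bool (k \<in> G i) * (p * \<bar>x$k\<bar> powr (p-2) * x$k)))"
definition "H x = (\<Sum>k\<in>T. (grad k x)\<^sup>2)"
definition "hfun i = group_pnorm p (G i) xbar powr (2*(q-p)) * (\<Sum>j\<in>G i. \<bar>xbar$j\<bar> powr (2*p-2))"
definition "Phi = q\<^sup>2 * real (card NZ) * Max (hfun ` NZ)"

lemma grad_single:
  assumes i0: "i0 \<in> NZ" "k \<in> G i0"
  shows "grad k x = q * Sg i0 x powr (q/p-1) * \<bar>x$k\<bar> powr (p-2) * x$k"
proof -
  have "grad k x = (q/p) * Sg i0 x powr (q/p - 1) * (p * \<bar>x$k\<bar> powr (p-2) * x$k)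
      + (\<Sum>i\<in>NZ-{i0}. (q/p) * Sg i x powr (q/p - 1) * (of_bool (k \<in> G i) * (p * \<bar>x$k\<bar> powr (p-2) * x$k)))"
    unfolding grad_def using i0 finNZ by (simp add: sum.remove)
  also have "(\<Sum>i\<in>NZ-{i0}. (q/p) * Sg i x powr (q/p - 1) * (of_bool (k \<in> G i) * (p * \<bar>x$k\<bar> powr (p-2) * x$k))) = 0"
    using NZ_uniq i0 by (intro sum.neutral) auto
  finally show ?thesis using p0 by simp
qed

lemma grad_sq:
  assumes i0: "i0 \<in> NZ" "k \<in> G i0" and S: "Sg i0 x > 0" and xk: "x$k \<noteq> 0"
  shows "(grad k x)\<^sup>2 = q\<^sup>2 * Sg i0 x powr (2*(q/p-1)) * \<bar>x$k\<bar> powr (2*p-2)"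
proof -
  let ?S = "Sg i0 x" and ?a = "\<bar>x$k\<bar>"
  have a0: "?a > 0" using xk by simp
  have e1: "(?S powr (q/p-1))\<^sup>2 = ?S powr (2*(q/p-1))"
    using S by (simp add: power2_eq_square powr_add[symmetric])
  have e2: "(?a powr (p-2))\<^sup>2 * (x$k)\<^sup>2 = ?a powr (2*p-2)"
  proof -
    have "(x$k)\<^sup>2 = ?a powr 2" using a0 by (simp add: powr_realpow[symmetric])
    hence "(?a powr (p-2))\<^sup>2 * (x$k)\<^sup>2 = ?a powr (p-2) * ?a powr (p-2) * ?a powr 2"
      by (simp only: power2_eq_square[of "?a powr (p-2)"])
    also have "\<dots> = ?a powr ((p-2) + (p-2) + 2)" by (simp only: powr_add)
    also have "(p-2) + (p-2) + 2 = 2*p-2" by simp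
    finally show ?thesis .
  qed
  have "(grad k x)\<^sup>2 = q\<^sup>2 * (?S powr (q/p-1))\<^sup>2 * ((?a powr (p-2))\<^sup>2 * (x$k)\<^sup>2)"
    unfolding grad_single[OF i0] by (simp add: power_mult_distrib)
  also have "\<dots> = q\<^sup>2 * ?S powr (2*(q/p-1)) * ?a powr (2*p-2)" unfolding e1 e2 by simp
  finally show ?thesis .
qed

lemma xbar_NZ: "i \<in> NZ \<Longrightarrow> j \<in> G i \<Longrightarrow> xbar$j \<noteq> 0"
  using NZ_sub T_def by auto

lemma Sg_xbar_pos: "i \<in> NZ \<Longrightarrow> Sg i xbar > 0"
  using Sg_pos xbar_NZ by blast

lemma hfun_eq: "i \<in> NZ \<Longrightarrow> hfun i = Sg i xbar powr (2*(q/p-1)) * (\<Sum>j\<in>G i. \<bar>xbar$j\<bar> powr (2*p-2))"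
proof -
  have "group_pnorm p (G i) xbar powr (2*(q-p)) = Sg i xbar powr ((1/p)*(2*(q-p)))"
    unfolding group_pnorm_def Sg_def by (simp add: powr_powr)
  also have "(1/p)*(2*(q-p)) = 2*(q/p-1)" using p0 by (simp add: field_simps)
  finally show ?thesis unfolding hfun_def by simp
qed

lemma hfun_pos: "i \<in> NZ \<Longrightarrow> hfun i > 0"
proof -
  assume i: "i \<in> NZ"
  have "(\<Sum>j\<in>G i. \<bar>xbar$j\<bar> powr (2*p-2)) > 0"
    using nonempty[of i] i NZ_def xbar_NZ[OF i] by (intro sum_pos) auto
  thus ?thesis using hfun_eq[OF i] Sg_xbar_pos[OF i] by simp
qed

lemma H_xbar_eq: "H xbar = q\<^sup>2 * (\<Sum>i\<in>NZ. hfun i)"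
proof -
  have "H xbar = (\<Sum>i\<in>NZ. \<Sum>k\<in>G i. (grad k xbar)\<^sup>2)"
    unfolding H_def T_Union using finNZ NZ_uniq
    by (intro sum.UNION_disjoint) (auto simp: disjoint_iff)
  also have "\<dots> = (\<Sum>i\<in>NZ. \<Sum>k\<in>G i. q\<^sup>2 * Sg i xbar powr (2*(q/p-1)) * \<bar>xbar$k\<bar> powr (2*p-2))"
    using grad_sq Sg_xbar_pos xbar_NZ by (intro sum.cong refl) auto
  also have "\<dots> = (\<Sum>i\<in>NZ. q\<^sup>2 * hfun i)"
    using hfun_eq by (intro sum.cong refl) (simp add: sum_distrib_left mult.assoc)
  finally show ?thesis by (simp add: sum_distrib_left)
qed

lemma H_le_Phi: "H xbar \<le> Phi"
proof -
  have "(\<Sum>i\<in>NZ. hfun i) \<le> real (card NZ) * Max (hfun ` NZ)"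
    using finNZ by (intro sum_bounded_above) auto
  thus ?thesis unfolding H_xbar_eq Phi_def by (simp add: mult.assoc mult_left_mono)
qed

lemma H_pos: "T \<noteq> {} \<Longrightarrow> H xbar > 0"
proof -
  assume "T \<noteq> {}"
  hence "NZ \<noteq> {}" using NZ_empty_iff by simp
  hence "(\<Sum>i\<in>NZ. hfun i) > 0" using finNZ hfun_pos by (intro sum_pos) auto
  thus ?thesis unfolding H_xbar_eq using q0 by simp
qed

lemma H_T_empty: "T = {} \<Longrightarrow> H x = 0 \<and> Phi = 0"
  unfolding H_def Phi_def using NZ_empty_iff by simp

lemma H_cont: "(H \<longlongrightarrow> H xbar) (at xbar)"
proof -
  have Sg_t: "((\<lambda>x. Sg i x) \<longlongrightarrow> Sg i xbar) (at xbar)" for i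
    unfolding Sg_def using p0
    by (intro tendsto_intros) auto
  show ?thesis
    unfolding H_def grad_def
    using Sg_t T_def
    by (intro tendsto_intros) (auto dest: Sg_xbar_pos)
qed

lemma delta0: "\<exists>d0>0. \<forall>x. dist x xbar < d0 \<longrightarrow> (\<forall>j\<in>T. x$j \<noteq> 0) \<and> H x \<le> 4 * Phi"
proof (cases "T = {}")
  case True
  thus ?thesis using H_T_empty by (intro exI[of _ 1]) auto
next
  case False
  have hx: "H xbar < 4 * Phi" using H_pos[OF False] H_le_Phi by simp
  have ev1: "eventually (\<lambda>x. H x < 4 * Phi) (at xbar)"
    by (rule order_tendstoD(2)[OF H_cont hx])
  have ev2: "eventually (\<lambda>x. \<forall>j\<in>T. x$j \<noteq> 0) (at xbar)"
  proof (rule eventually_ball_finite)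
    show "finite T" by simp
    show "\<forall>j\<in>T. eventually (\<lambda>x. x$j \<noteq> 0) (at xbar)"
    proof
      fix j assume "j \<in> T"
      have "((\<lambda>x. x$j) \<longlongrightarrow> xbar$j) (at xbar)" by (intro tendsto_intros)
      thus "eventually (\<lambda>x. x$j \<noteq> 0) (at xbar)"
        using \<open>j \<in> T\<close> T_def by (intro tendsto_imp_eventually_ne) auto
    qed
  qed
  obtain d where d: "d > 0" "\<forall>x. x \<noteq> xbar \<and> dist x xbar < d \<longrightarrow> (\<forall>j\<in>T. x$j \<noteq> 0) \<and> H x < 4 * Phi"
    using eventually_conj[OF ev2 ev1] unfolding eventually_at by auto
  have "\<forall>x. dist x xbar < d \<longrightarrow> (\<forall>j\<in>T. x$j \<noteq> 0) \<and> H x \<le> 4 * Phi"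
  proof (intro allI impI)
    fix x assume "dist x xbar < d"
    thus "(\<forall>j\<in>T. x$j \<noteq> 0) \<and> H x \<le> 4 * Phi"
      using d hx T_def by (cases "x = xbar") auto
  qed
  thus ?thesis using d(1) by blast
qed

end


lemma deriv_abs_powr:
  fixes a c p :: real
  assumes a: "a \<noteq> 0"
  shows "DERIV (\<lambda>t. \<bar>a + t*c\<bar> powr p) 0 :> p * \<bar>a\<bar> powr (p-2) * a * c"
proof -
  have f: "(\<lambda>t. \<bar>a + t*c\<bar> powr p) = (\<lambda>t. ((a + t*c)\<^sup>2) powr (p/2))"
    by (rule ext) (rule abs_powr_sq)
  have g: "DERIV (\<lambda>t. (a + t*c)\<^sup>2) 0 :> 2 * a * c"
    by (auto intro!: derivative_eq_intros)
  have pos: "(\<lambda>t. (a + t*c)\<^sup>2) 0 > 0" using a by simp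
  have D: "DERIV (\<lambda>t. ((a + t*c)\<^sup>2) powr (p/2)) 0 :> (p/2) * (a\<^sup>2) powr (p/2 - of_nat 1) * (2 * a * c)"
    using DERIV_fun_powr[OF g pos, of "p/2"] by simp
  have e: "(a\<^sup>2) powr (p/2 - of_nat 1) = \<bar>a\<bar> powr (p-2)"
    using abs_powr_sq[of a "p-2"] by (simp add: diff_divide_distrib)
  show ?thesis unfolding f using D unfolding e by (rule DERIV_cong) simp
qed

context gsetup begin

definition Fl :: "real \<Rightarrow> real^'n \<Rightarrow> real" where
  "Fl lam x = (norm (A *v x - A *v xbar))\<^sup>2 + lam * pq_norm p q r G x powr q"

lemma first_order:
  assumes zT: "onT z" and nz: "\<forall>j\<in>T. z$j \<noteq> 0" and k: "k \<in> T" and \<rho>: "\<rho> > 0"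
    and min: "\<forall>t. \<bar>t\<bar> < \<rho> \<longrightarrow> Fl lam z \<le> Fl lam (z + t *\<^sub>R axis k 1)"
  shows "2 * (column k A \<bullet> (A *v (z - xbar))) + lam * grad k z = 0"
proof -
  define a where "a = A *v (z - xbar)"
  define c where "c = column k A"
  define \<phi> where "\<phi> = (\<lambda>t. Fl lam (z + t *\<^sub>R axis k 1))"
  have onT_t: "onT (z + t *\<^sub>R axis k 1)" for t
    using zT k unfolding onT_def axis_def by auto
  have comp: "(z + t *\<^sub>R axis k 1) $ j = z$j + t * (if j = k then 1 else 0)" for t j
    by (simp add: axis_def)
  have phi_eq: "\<phi> = (\<lambda>t. (a \<bullet> a + 2 * t * (a \<bullet> c) + t\<^sup>2 * (c \<bullet> c))
      + lam * (\<Sum>i\<in>NZ. (\<Sum>j\<in>G i. \<bar>z$j + t * (if j = k then 1 else 0)\<bar> powr p) powr (q/p)))"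
  proof (rule ext)
    fix t
    have "A *v (z + t *\<^sub>R axis k 1) - A *v xbar = a + t *\<^sub>R c"
      unfolding a_def c_def
      by (simp add: matrix_vector_right_distrib matrix_vector_mult_diff_distrib matrix_vector_mult_scaleR matrix_vector_mult_basis)
    hence "(norm (A *v (z + t *\<^sub>R axis k 1) - A *v xbar))\<^sup>2 = a \<bullet> a + 2 * t * (a \<bullet> c) + t\<^sup>2 * (c \<bullet> c)"
    proof -
      assume h: "A *v (z + t *\<^sub>R axis k 1) - A *v xbar = a + t *\<^sub>R c"
      have "(norm (a + t *\<^sub>R c))\<^sup>2 = (a + t *\<^sub>R c) \<bullet> (a + t *\<^sub>R c)"
        by (simp add: power2_norm_eq_inner)
      also have "\<dots> = a \<bullet> a + 2 * t * (a \<bullet> c) + t\<^sup>2 * (c \<bullet> c)"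
        by (simp add: inner_add_left inner_add_right inner_commute power2_eq_square algebra_simps)
      finally show ?thesis unfolding h .
    qed
    moreover have "pq_norm p q r G (z + t *\<^sub>R axis k 1) powr q
        = (\<Sum>i\<in>NZ. (\<Sum>j\<in>G i. \<bar>z$j + t * (if j = k then 1 else 0)\<bar> powr p) powr (q/p))"
      unfolding P_onT[OF onT_t] Pt_def Sg_def comp ..
    ultimately show "\<phi> t = (a \<bullet> a + 2 * t * (a \<bullet> c) + t\<^sup>2 * (c \<bullet> c))
      + lam * (\<Sum>i\<in>NZ. (\<Sum>j\<in>G i. \<bar>z$j + t * (if j = k then 1 else 0)\<bar> powr p) powr (q/p))"
      unfolding \<phi>_def Fl_def by simp
  qed
  have Dsg: "DERIV (\<lambda>t. \<Sum>j\<in>G i. \<bar>z$j + t * (if j = k then 1 else 0)\<bar> powr p) 0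
      :> (\<Sum>j\<in>G i. p * \<bar>z$j\<bar> powr (p-2) * z$j * (if j = k then 1 else 0))" if i: "i \<in> NZ" for i
    using nz NZ_sub[OF i] by (intro DERIV_sum deriv_abs_powr) auto
  have sdelta: "(\<Sum>j\<in>G i. p * \<bar>z$j\<bar> powr (p-2) * z$j * (if j = k then 1 else 0))
      = of_bool (k \<in> G i) * (p * \<bar>z$k\<bar> powr (p-2) * z$k)" for i
  proof -
    have "(\<Sum>j\<in>G i. p * \<bar>z$j\<bar> powr (p-2) * z$j * (if j = k then 1 else 0))
       = (\<Sum>j\<in>G i. if j = k then p * \<bar>z$j\<bar> powr (p-2) * z$j else 0)"
      by (intro sum.cong) auto
    also have "\<dots> = of_bool (k \<in> G i) * (p * \<bar>z$k\<bar> powr (p-2) * z$k)"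
      by (simp add: sum.delta')
    finally show ?thesis .
  qed
  have Dpt: "DERIV (\<lambda>t. \<Sum>i\<in>NZ. (\<Sum>j\<in>G i. \<bar>z$j + t * (if j = k then 1 else 0)\<bar> powr p) powr (q/p)) 0
      :> grad k z"
    unfolding grad_def
  proof (intro DERIV_sum)
    fix i assume i: "i \<in> NZ"
    have pos: "(\<lambda>t. \<Sum>j\<in>G i. \<bar>z$j + t * (if j = k then 1 else 0)\<bar> powr p) 0 > 0"
      using Sg_pos[OF i, of z] nz NZ_sub[OF i] unfolding Sg_def by auto
    have "DERIV (\<lambda>t. (\<Sum>j\<in>G i. \<bar>z$j + t * (if j = k then 1 else 0)\<bar> powr p) powr (q/p)) 0
      :> (q/p) * (\<Sum>j\<in>G i. \<bar>z$j + 0 * (if j = k then 1 else 0)\<bar> powr p) powr (q/p - of_nat 1)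
          * (\<Sum>j\<in>G i. p * \<bar>z$j\<bar> powr (p-2) * z$j * (if j = k then 1 else 0))"
      by (rule DERIV_fun_powr[OF Dsg[OF i] pos])
    thus "DERIV (\<lambda>t. (\<Sum>j\<in>G i. \<bar>z$j + t * (if j = k then 1 else 0)\<bar> powr p) powr (q/p)) 0
      :> (q/p) * Sg i z powr (q/p - 1) * (of_bool (k \<in> G i) * (p * \<bar>z$k\<bar> powr (p-2) * z$k))"
      unfolding sdelta Sg_def by simp
  qed
  have D: "DERIV \<phi> 0 :> 2 * (a \<bullet> c) + lam * grad k z"
    unfolding phi_eq
    by (rule DERIV_cong, (rule derivative_intros Dpt)+) simp
  have "2 * (a \<bullet> c) + lam * grad k z = 0"
  proof (rule DERIV_local_min[OF D \<rho>])
    show "\<forall>y. \<bar>0 - y\<bar> < \<rho> \<longrightarrow> \<phi> 0 \<le> \<phi> y"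
      using min unfolding \<phi>_def by simp
  qed
  thus ?thesis unfolding a_def c_def by (simp add: inner_commute)
qed

end


lemma powr_lower_lin:
  fixes y eps q :: real
  assumes "0 \<le> y" "y \<le> eps" "q < 1"
  shows "eps powr (q-1) * y \<le> y powr q"
proof (cases "y = 0")
  case True then show ?thesis by simp
next
  case False
  hence y0: "y > 0" using assms by simp
  have "eps powr (q-1) \<le> y powr (q-1)"
    using powr_mono2'[of "q-1" y eps] y0 assms by simp
  hence "eps powr (q-1) * y \<le> y powr (q-1) * y" using y0 by (simp add: mult_right_mono)
  also have "y powr (q-1) * y = y powr q"
  proof -
    have "y powr (q-1) * y powr 1 = y powr ((q-1)+1)" by (simp only: powr_add)
    thus ?thesis using y0 by simp
  qed
  finally show ?thesis .
qed

context gsetup begin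

lemma local_min:
  assumes lam: "lam > 0" and zT: "onT z" and \<delta>: "\<delta> > 0" and zin: "dist z xbar < \<delta>"
    and zmin: "\<forall>y. onT y \<and> dist y xbar \<le> \<delta> \<longrightarrow> Fl lam z \<le> Fl lam y"
  shows "local_minimizer (Fl lam) z"
proof -
  define \<rho> where "\<rho> = \<delta> - dist z xbar"
  define C where "C = 2 * (CA * \<delta>) * CA"
  define n where "n = real CARD('n)"
  define B where "B = lam / (C * n + 1)"
  define \<epsilon> where "\<epsilon> = B powr (1/(1-q))"
  have C0: "C \<ge> 0" unfolding C_def using CA_nonneg \<delta> by simp
  have n0: "n > 0" unfolding n_def by simp
  have B0: "B > 0" unfolding B_def using lam C0 n0 by (simp add: add_nonneg_pos)
  have eps0: "\<epsilon> > 0" unfolding \<epsilon>_def using B0 by simp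
  have rho0: "\<rho> > 0" unfolding \<rho>_def using zin by simp
  have epsq: "\<epsilon> powr (q-1) = (C * n + 1) / lam"
  proof -
    have "\<epsilon> powr (q-1) = B powr ((1/(1-q)) * (q-1))" unfolding \<epsilon>_def by (simp add: powr_powr)
    also have "(1/(1-q)) * (q-1) = -1" using q1 by (simp add: field_simps)
    moreover have "C * n + 1 > 0" using C0 n0 by (simp add: add_nonneg_pos)
    ultimately show ?thesis using B0 lam unfolding B_def by (simp add: powr_neg_one)
  qed
  show ?thesis unfolding local_minimizer_def
  proof (intro exI[of _ "min \<rho> \<epsilon>"] conjI allI impI)
    show "min \<rho> \<epsilon> > 0" using rho0 eps0 by simp
    fix y assume dy: "dist y (z::real^'n) < min \<rho> \<epsilon>"
    define yT where "yT = proj y"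
    have yTc: "yT $ j = (if j \<in> T then y$j else 0)" for j unfolding yT_def proj_def by simp
    have zoff: "j \<notin> T \<Longrightarrow> z$j = 0" for j using zT onT_def by auto
    have "dist yT z \<le> dist y z"
      unfolding dist_norm by (rule norm_le_componentwise_cart) (auto simp: yTc zoff)
    hence "dist yT xbar < \<delta>"
      using dist_triangle[of yT xbar z] dy unfolding \<rho>_def by (simp add: dist_commute)
    hence m1: "Fl lam z \<le> Fl lam yT" using zmin onT_proj yT_def by simp
    define u where "u = A *v yT - A *v xbar"
    define w where "w = A *v (y - yT)"
    define L1 where "L1 = (\<Sum>j\<in>UNIV. \<bar>(y - yT) $ j\<bar>)"
    define Z where "Z = (\<Sum>i\<in>ZG. Sg i y powr (q/p))"
    have L10: "L1 \<ge> 0" unfolding L1_def by (simp add: sum_nonneg)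
    have Z0: "Z \<ge> 0" unfolding Z_def by (simp add: sum_nonneg)
    have nu: "norm u \<le> CA * \<delta>"
    proof -
      have "norm u = norm (A *v (yT - xbar))" unfolding u_def by (simp add: matrix_vector_mult_diff_distrib)
      also have "\<dots> \<le> CA * norm (yT - xbar)" by (rule CA_bound)
      also have "\<dots> \<le> CA * \<delta>" using \<open>dist yT xbar < \<delta>\<close> CA_nonneg
        by (intro mult_left_mono) (auto simp: dist_norm)
      finally show ?thesis .
    qed
    have nw: "norm w \<le> CA * L1"
    proof -
      have "norm w \<le> CA * norm (y - yT)" unfolding w_def by (rule CA_bound)
      also have "\<dots> \<le> CA * L1" unfolding L1_def using CA_nonneg
        by (intro mult_left_mono norm_le_l1_cart)
      finally show ?thesis .
    qed
    have uw: "A *v y - A *v xbar = u + w"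
      unfolding u_def w_def by (simp add: matrix_vector_mult_diff_distrib)
    have quad: "(norm (u + w))\<^sup>2 \<ge> (norm u)\<^sup>2 - C * L1"
    proof -
      have "(norm (u + w))\<^sup>2 = (norm u)\<^sup>2 + 2 * (u \<bullet> w) + (norm w)\<^sup>2"
        by (simp add: power2_norm_eq_inner inner_add_left inner_add_right inner_commute)
      moreover have "u \<bullet> w \<ge> - (norm u * norm w)"
        using Cauchy_Schwarz_ineq2[of u w] by simp
      moreover have "norm u * norm w \<le> (CA * \<delta>) * (CA * L1)"
        using nu nw CA_nonneg \<delta> by (intro mult_mono) auto
      ultimately show ?thesis unfolding C_def by (simp add: algebra_simps)
    qed
    have yj_small: "\<bar>y$j\<bar> \<le> \<epsilon>" if "j \<notin> T" for j
    proof -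
      have "\<bar>y$j\<bar> = \<bar>(y - z)$j\<bar>" using zoff[OF that] by simp
      also have "\<dots> \<le> norm (y - z)" by (rule component_le_norm_cart)
      also have "\<dots> < \<epsilon>" using dy by (simp add: dist_norm)
      finally show ?thesis by simp
    qed
    have yj_Z: "\<bar>y$j\<bar> powr q \<le> Z" if jT: "j \<notin> T" for j
    proof -
      obtain i0 where i0: "i0 \<in> ZG" "j \<in> G i0" using notT_group[OF jT] by blast
      have "\<bar>y$j\<bar> powr q = (\<bar>y$j\<bar> powr p) powr (q/p)" using p0 by (simp add: powr_powr)
      also have "\<dots> \<le> Sg i0 y powr (q/p)"
        unfolding Sg_def using i0 p0 q0
        by (intro powr_mono2) (auto intro: member_le_sum)
      also have "\<dots> \<le> Z" unfolding Z_def using i0 finZG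
        by (intro member_le_sum) auto
      finally show ?thesis .
    qed
    have L1eq: "L1 = (\<Sum>j\<in>-T. \<bar>y$j\<bar>)"
      unfolding L1_def by (intro sum.mono_neutral_cong_right) (auto simp: yTc)
    have "\<epsilon> powr (q-1) * L1 = (\<Sum>j\<in>-T. \<epsilon> powr (q-1) * \<bar>y$j\<bar>)"
      unfolding L1eq by (simp add: sum_distrib_left)
    also have "\<dots> \<le> (\<Sum>j\<in>-T. Z)"
    proof (intro sum_mono)
      fix j assume "j \<in> -T"
      hence "j \<notin> T" by simp
      have "\<epsilon> powr (q-1) * \<bar>y$j\<bar> \<le> \<bar>y$j\<bar> powr q"
        using powr_lower_lin[OF _ yj_small[OF \<open>j \<notin> T\<close>] q1] by simp
      also have "\<dots> \<le> Z" by (rule yj_Z[OF \<open>j \<notin> T\<close>])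
      finally show "\<epsilon> powr (q-1) * \<bar>y$j\<bar> \<le> Z" .
    qed
    also have "\<dots> = real (card (-T)) * Z" by simp
    also have "\<dots> \<le> n * Z"
      unfolding n_def using Z0 by (intro mult_right_mono) (auto simp: card_mono)
    finally have "(C * n + 1) / lam * L1 \<le> n * Z" unfolding epsq .
    hence "(C * n + 1) * L1 \<le> lam * n * Z" using lam by (simp add: field_simps)
    hence "C * n * L1 \<le> lam * n * Z" using L10 by (simp add: algebra_simps)
    hence lin: "C * L1 \<le> lam * Z" using n0 by (simp add: mult.commute mult.left_commute)
    have Py: "pq_norm p q r G y powr q = Pt yT + Z"
      unfolding P_eq Z_def yT_def Pt_proj ..
    have PyT: "pq_norm p q r G yT powr q = Pt yT"
      using P_onT onT_proj yT_def by simp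
    have "Fl lam yT = (norm u)\<^sup>2 + lam * Pt yT" unfolding Fl_def PyT u_def ..
    also have "\<dots> \<le> (norm (u + w))\<^sup>2 + lam * (Pt yT + Z)"
      using quad lin by (simp add: algebra_simps)
    also have "\<dots> = Fl lam y" unfolding Fl_def Py uw ..
    finally show "Fl lam z \<le> Fl lam y" using m1 by simp
  qed
qed

end


context gsetup begin

lemma Sg_cont: "continuous_on S (\<lambda>x. Sg i x)"
  unfolding Sg_def
  by (intro continuous_intros continuous_on_powr') (auto simp: p0)

lemma Fl_cont: "continuous_on S (Fl lam)"
proof -
  have e: "Fl lam = (\<lambda>x. (norm (A *v x - A *v xbar))\<^sup>2 + lam *
      ((\<Sum>i\<in>NZ. Sg i x powr (q/p)) + (\<Sum>i\<in>ZG. Sg i x powr (q/p))))"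
    unfolding Fl_def P_eq Pt_def ..
  have lin: "continuous_on S (\<lambda>x. A *v x)"
    by (rule matrix_vector_mult_linear_continuous_on)
  show ?thesis unfolding e
    using q0 p0 Sg_nonneg
    by (intro continuous_intros continuous_on_powr' Sg_cont lin) auto
qed

lemma closed_onT: "closed {x::real^'n. onT x}"
proof -
  have "{x::real^'n. onT x} = (\<Inter>j\<in>-T. {x. x$j = 0})" unfolding onT_def by auto
  moreover have "closed {x::real^'n. x$j = 0}" for j
    by (intro closed_Collect_eq continuous_intros)
  ultimately show ?thesis by auto
qed

lemma onT_diff: "onT x \<Longrightarrow> onT y \<Longrightarrow> onT (x - y)" unfolding onT_def by simp

lemma main:
  "\<exists>\<kappa>>0. \<forall>lam\<in>{0<..<\<kappa>}. \<exists>z. local_minimizer (Fl lam) z \<and> (norm (z - xbar))\<^sup>2 \<le> lam\<^sup>2 * nN\<^sup>2 * Phi"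
proof -
  obtain d0 where d0: "d0 > 0" "\<forall>x. dist x xbar < d0 \<longrightarrow> (\<forall>j\<in>T. x$j \<noteq> 0) \<and> H x \<le> 4 * Phi"
    using delta0 by blast
  define \<delta> where "\<delta> = d0 / 2"
  define X where "X = nN\<^sup>2 * CM2 * Pt xbar"
  define \<kappa> where "\<kappa> = \<delta>\<^sup>2 / (X + 1)"
  have \<delta>0: "\<delta> > 0" unfolding \<delta>_def using d0 by simp
  have X0: "X \<ge> 0" unfolding X_def using CM2_nonneg Pt_nonneg by simp
  have \<kappa>0: "\<kappa> > 0" unfolding \<kappa>_def using \<delta>0 X0 by simp
  show ?thesis
  proof (intro exI[of _ \<kappa>] conjI ballI)
    show "\<kappa> > 0" by fact
    fix lam assume "lam \<in> {0<..<\<kappa>}"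
    hence lam: "lam > 0" "lam < \<kappa>" by auto
    define K where "K = cball xbar \<delta> \<inter> {x::real^'n. onT x}"
    have Kc: "compact K" unfolding K_def using closed_onT by (intro compact_Int_closed) auto
    have xK: "xbar \<in> K" unfolding K_def using onT_xbar \<delta>0 by simp
    obtain z where zK: "z \<in> K" and zmin: "\<forall>y\<in>K. Fl lam z \<le> Fl lam y"
      using continuous_attains_inf[OF Kc _ Fl_cont] xK by blast
    have zT: "onT z" using zK K_def by simp
    define d where "d = z - xbar"
    have dT: "onT d" unfolding d_def by (rule onT_diff[OF zT onT_xbar])
    have "Fl lam z \<le> Fl lam xbar" using zmin xK by blast
    hence "(norm (A *v d))\<^sup>2 + lam * Pt z \<le> lam * Pt xbar"
      unfolding Fl_def P_onT[OF zT] P_onT[OF onT_xbar] d_def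
      by (simp add: matrix_vector_mult_diff_distrib)
    hence Ad: "(norm (A *v d))\<^sup>2 \<le> lam * Pt xbar"
      using Pt_nonneg[of z] lam by (smt (verit) mult_nonneg_nonneg)
    have "(norm d)\<^sup>2 \<le> nN\<^sup>2 * CM2 * (norm (A *v d))\<^sup>2" by (rule apriori[OF dT])
    also have "\<dots> \<le> nN\<^sup>2 * CM2 * (lam * Pt xbar)"
      using Ad CM2_nonneg by (intro mult_left_mono) auto
    also have "\<dots> = X * lam" unfolding X_def by simp
    also have "\<dots> < \<delta>\<^sup>2"
    proof -
      have "X * lam \<le> (X + 1) * lam" using lam by simp
      also have "\<dots> < (X + 1) * \<kappa>" using lam X0 by (intro mult_strict_left_mono) auto
      also have "\<dots> = \<delta>\<^sup>2" unfolding \<kappa>_def using X0 by simp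
      finally show ?thesis .
    qed
    finally have "(norm d)\<^sup>2 < \<delta>\<^sup>2" .
    hence nd: "norm d < \<delta>" using \<delta>0 by (simp add: power_less_imp_less_base)
    hence zin: "dist z xbar < \<delta>" unfolding d_def by (simp add: dist_norm)
    have zmin': "\<forall>y. onT y \<and> dist y xbar \<le> \<delta> \<longrightarrow> Fl lam z \<le> Fl lam y"
      using zmin unfolding K_def by (auto simp: dist_commute)
    have LM: "local_minimizer (Fl lam) z" by (rule local_min[OF lam(1) zT \<delta>0 zin zmin'])
    have zd0: "dist z xbar < d0" using zin \<delta>_def d0 by simp
    have nz: "\<forall>j\<in>T. z$j \<noteq> 0" and Hz: "H z \<le> 4 * Phi" using d0(2) zd0 by auto
    have foc: "column k A \<bullet> (A *v d) = - (lam/2) * grad k z" if k: "k \<in> T" for k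
    proof -
      have "2 * (column k A \<bullet> (A *v (z - xbar))) + lam * grad k z = 0"
      proof (rule first_order[OF zT nz k])
        show "\<delta> - norm d > 0" using nd by simp
        show "\<forall>t. \<bar>t\<bar> < \<delta> - norm d \<longrightarrow> Fl lam z \<le> Fl lam (z + t *\<^sub>R axis k 1)"
        proof (intro allI impI)
          fix t assume t: "\<bar>t\<bar> < \<delta> - norm d"
          have "onT (z + t *\<^sub>R axis k 1)" using zT k unfolding onT_def axis_def by auto
          moreover have "dist (z + t *\<^sub>R axis k 1) xbar \<le> \<delta>"
          proof -
            have "dist (z + t *\<^sub>R axis k 1) xbar = norm (d + t *\<^sub>R axis k 1)"
              unfolding d_def dist_norm by (simp add: algebra_simps)
            also have "\<dots> \<le> norm d + norm (t *\<^sub>R axis k (1::real))" by (rule norm_triangle_ineq)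
            also have "norm (t *\<^sub>R axis k (1::real)) = \<bar>t\<bar>" by simp
            finally show ?thesis using t by simp
          qed
          ultimately show "Fl lam z \<le> Fl lam (z + t *\<^sub>R axis k 1)" using zmin' by blast
        qed
      qed
      thus ?thesis unfolding d_def by (simp add: field_simps)
    qed
    have "norm d \<le> nN * sqrt (\<Sum>k\<in>T. (column k A \<bullet> (A *v d))\<^sup>2)" by (rule norm_d_bound[OF dT])
    also have "(\<Sum>k\<in>T. (column k A \<bullet> (A *v d))\<^sup>2) = (lam/2)\<^sup>2 * H z"
      unfolding H_def sum_distrib_left using foc by (intro sum.cong) (auto simp: power_mult_distrib power_divide)
    finally have "norm d \<le> nN * ((lam/2) * sqrt (H z))"
      using lam by (simp add: real_sqrt_mult)
    hence "(norm d)\<^sup>2 \<le> (nN * ((lam/2) * sqrt (H z)))\<^sup>2"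
      by (rule power_mono) simp
    also have "\<dots> = nN\<^sup>2 * (lam/2)\<^sup>2 * H z"
    proof -
      have Hn: "H z \<ge> 0" unfolding H_def by (simp add: sum_nonneg)
      have "(nN * ((lam/2) * sqrt (H z)))\<^sup>2 = nN\<^sup>2 * (lam/2)\<^sup>2 * (sqrt (H z))\<^sup>2"
        by (simp only: power_mult_distrib mult.assoc)
      also have "(sqrt (H z))\<^sup>2 = H z" using Hn by simp
      finally show ?thesis .
    qed
    also have "\<dots> \<le> nN\<^sup>2 * (lam/2)\<^sup>2 * (4 * Phi)"
      using Hz by (intro mult_left_mono) auto
    also have "\<dots> = lam\<^sup>2 * nN\<^sup>2 * Phi" by (simp add: power_divide)
    finally have "(norm (z - xbar))\<^sup>2 \<le> lam\<^sup>2 * nN\<^sup>2 * Phi" unfolding d_def .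
    with LM show "\<exists>z. local_minimizer (Fl lam) z \<and> (norm (z - xbar))\<^sup>2 \<le> lam\<^sup>2 * nN\<^sup>2 * Phi"
      by blast
  qed
qed

end

theorem theorem2p2:
  fixes p q :: real and A :: "real^'n^'m" and xbar :: "real^'n"
    and r :: nat and G :: "nat \<Rightarrow> 'n set"
  assumes "group_partition r G"
    and "0 < q" and "q < 1" and "1 \<le> p"
    and "\<forall>i\<in>{1..r}. group_nonzero (G i) xbar \<longrightarrow> group_active (G i) xbar"
    and "cols_independent A {j. xbar $ j \<noteq> 0}"
  shows "\<exists>\<kappa>>0. \<exists>xs :: real \<Rightarrow> real^'n. \<forall>lam\<in>{0<..<\<kappa>}.
     local_minimizer (\<lambda>x. (norm (A *v x - A *v xbar))\<^sup>2 + lam * pq_norm p q r G x powr q) (xs lam)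
     \<and> (norm (xs lam - xbar))\<^sup>2 \<le>
         lam\<^sup>2 * q\<^sup>2 * real (card {i\<in>{1..r}. group_nonzero (G i) xbar})
         * (spec_norm_on {j. xbar $ j \<noteq> 0} (inv_on {j. xbar $ j \<noteq> 0} (gram_sub A)))\<^sup>2
         * Max ((\<lambda>i. group_pnorm p (G i) xbar powr (2 * (q - p))
                     * (\<Sum>j\<in>G i. \<bar>xbar $ j\<bar> powr (2 * p - 2)))
                ` {i\<in>{1..r}. group_nonzero (G i) xbar})"
proof -
  interpret gsetup p q A xbar r G using assms by unfold_locales
  obtain \<kappa> where k0: "\<kappa> > 0" and
    kk: "\<forall>lam\<in>{0<..<\<kappa>}. \<exists>z. local_minimizer (Fl lam) z \<and> (norm (z - xbar))\<^sup>2 \<le> lam\<^sup>2 * nN\<^sup>2 * Phi"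
    using main by blast
  from kk obtain xs where
    xs: "\<forall>lam\<in>{0<..<\<kappa>}. local_minimizer (Fl lam) (xs lam) \<and> (norm (xs lam - xbar))\<^sup>2 \<le> lam\<^sup>2 * nN\<^sup>2 * Phi"
    by metis
  have e1: "(\<lambda>x. (norm (A *v x - A *v xbar))\<^sup>2 + lam * pq_norm p q r G x powr q) = Fl lam" for lam
    by (rule ext) (simp add: Fl_def)
  have hf: "hfun = (\<lambda>i. group_pnorm p (G i) xbar powr (2 * (q - p))
                     * (\<Sum>j\<in>G i. \<bar>xbar $ j\<bar> powr (2 * p - 2)))"
    by (rule ext) (simp add: hfun_def)
  have e2: "lam\<^sup>2 * q\<^sup>2 * real (card {i\<in>{1..r}. group_nonzero (G i) xbar})
         * (spec_norm_on {j. xbar $ j \<noteq> 0} (inv_on {j. xbar $ j \<noteq> 0} (gram_sub A)))\<^sup>2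
         * Max ((\<lambda>i. group_pnorm p (G i) xbar powr (2 * (q - p))
                     * (\<Sum>j\<in>G i. \<bar>xbar $ j\<bar> powr (2 * p - 2)))
                ` {i\<in>{1..r}. group_nonzero (G i) xbar}) = lam\<^sup>2 * nN\<^sup>2 * Phi" for lam
    unfolding nN_def N_def M_def T_def Phi_def NZ_def hf[symmetric] by (simp add: algebra_simps)
  show ?thesis
    using k0 xs unfolding e1 e2 by blast
qed

end
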